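(* Let $\ell\in\{\tfrac12,1,\tfrac32,\dots\}$ and write $n=2\ell$. For $\rho\in\mathbb{C}$ put $q=e^{i\pi\rho}$ and $$A^{\ell}_{n}(q)=\prod_{k=1}^{n}\frac{(1-q^{2k})\big(q^{2(\ell-k+1)}-q^{-2\ell}\big)}{1-q^2}.$$ Then, as an identity of meromorphic functions of $\rho$, $$\frac{A^{\ell}_{2\ell}(q)}{(2\ell)!}\,S_{2\ell}\big(1-2\ell\rho,\;2\rho-1,\;\rho\big)=\frac{(2\pi i)^{2\ell}}{(2\ell)!}\prod_{k=1}^{2\ell}\frac{\Gamma\big((k+1)\rho-1\big)\,\Gamma(-\rho)}{\Gamma(k\rho)^2\,\Gamma(-k\rho)} .$$
   Context: $S_n(\alpha,\beta,\gamma)$ denotes the (analytically continued) Selberg integral, i.e. the meromorphic function $$S_n(\alpha,\beta,\gamma)=\prod_{j=0}^{n-1}\frac{\Gamma(\alpha+j\gamma)\,\Gamma(\beta+j\gamma)\,\Gamma(1+(j+1)\gamma)}{\Gamma(\alpha+\beta+(n+j-1)\gamma)\,\Gamma(1+\gamma)},$$ which equals $\int_{[0,1]^n}\prod_i t_i^{\alpha-1}(1-t_i)^{\beta-1}\prod_{i<j}|t_i-t_j|^{2\gamma}\,dt$ where that integral converges. *)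

theory Defs
  imports "HOL-Analysis.Analysis"
begin

text \<open>Analytically continued Selberg integral, given by its closed product formula
  (with Isabelle's total Gamma function on the complex numbers).\<close>
definition selberg :: "nat \<Rightarrow> complex \<Rightarrow> complex \<Rightarrow> complex \<Rightarrow> complex" where
  "selberg n \<alpha> \<beta> \<gamma> =
     (\<Prod>j<n. Gamma (\<alpha> + of_nat j * \<gamma>) * Gamma (\<beta> + of_nat j * \<gamma>)
               * Gamma (1 + of_nat (j + 1) * \<gamma>)
             / (Gamma (\<alpha> + \<beta> + (of_nat n + of_nat j - 1) * \<gamma>) * Gamma (1 + \<gamma>)))"

text \<open>The prefactor A, with n = 2 l and q = exp(i pi rho). All exponents of q are integers:
  q^(2(l-k+1)) = q^(n-2k+2), q^(-2l) = q^(-n).\<close>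
definition A_pref :: "nat \<Rightarrow> complex \<Rightarrow> complex" where
  "A_pref n q =
     (\<Prod>k=1..n. (1 - q ^ (2 * k)) * (q powi (int n - 2 * int k + 2) - q powi (- int n))
                 / (1 - q ^ 2))"

end

theory Submission
  imports Defs
begin

lemma prod_rev1n:
  fixes f :: "nat \<Rightarrow> 'a::comm_monoid_mult"
  shows "(\<Prod>k=1..n. f (n + 1 - k)) = (\<Prod>k=1..n. f k)"
  by (rule prod.reindex_bij_witness[where i="\<lambda>k. n + 1 - k" and j="\<lambda>k. n + 1 - k"]) auto

lemma prod_shift1n:
  fixes f :: "nat \<Rightarrow> 'a::comm_monoid_mult"
  shows "(\<Prod>j<n. f j) = (\<Prod>k=1..n. f (k - 1))"
  by (rule prod.reindex_bij_witness[where i="\<lambda>k. k - 1" and j="\<lambda>j. j + 1"]) auto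

lemma sparse_mult_Ints:
  assumes "m > 0"
  shows "{z::complex. of_nat m * z \<in> \<int>} sparse_in UNIV"
proof (rule uniform_discrete_imp_sparse, rule uniformI2[of "1 / real m"])
  show "0 < 1 / real m" using assms by simp
  fix x y :: complex
  assume "x \<in> {z. of_nat m * z \<in> \<int>}" "y \<in> {z. of_nat m * z \<in> \<int>}" "x \<noteq> y"
  then obtain a b :: int where ab: "of_nat m * x = of_int a" "of_nat m * y = of_int b"
    by (auto elim!: Ints_cases)
  have "a \<noteq> b" using ab \<open>x \<noteq> y\<close> assms by (metis mult_cancel_left of_nat_eq_0_iff not_gr0)
  have "of_nat m * (x - y) = of_int (a - b)" using ab by (simp add: algebra_simps)
  hence "real m * norm (x - y) = \<bar>real_of_int (a - b)\<bar>"
    by (metis norm_mult norm_of_int norm_of_nat)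
  moreover have "\<bar>real_of_int (a - b)\<bar> \<ge> 1" using \<open>a \<noteq> b\<close> by linarith
  ultimately have "real m * norm (x - y) \<ge> 1" by simp
  thus "1 / real m \<le> dist x y" using assms by (simp add: dist_norm field_simps)
qed

lemma exc_sparse:
  "{z::complex. \<exists>m\<in>{1..n}. of_nat m * z \<in> \<int>} sparse_in UNIV"
proof -
  have "{z::complex. \<exists>m\<in>{1..n}. of_nat m * z \<in> \<int>} = (\<Union>m\<in>{1..n}. {z. of_nat m * z \<in> \<int>})"
    by auto
  also have "\<dots> sparse_in UNIV"
    by (rule sparse_in_UN_finite) (auto intro: sparse_mult_Ints)
  finally show ?thesis .
qed

lemma refl_s:
  fixes z :: complex
  assumes "z \<notin> \<int>"
  shows "(exp (\<i> * of_real pi * z) - exp (- (\<i> * of_real pi * z))) * Gamma z * Gamma (1 - z)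
         = 2 * of_real pi * \<i>"
proof -
  have "sin (of_real pi * z) \<noteq> 0"
  proof
    assume "sin (of_real pi * z) = 0"
    then obtain k :: int where "of_real pi * z = of_real (k * pi)" by (auto simp: sin_eq_0)
    hence "z = of_int k" by (simp add: field_simps)
    thus False using assms by auto
  qed
  moreover have "exp (\<i> * of_real pi * z) - exp (- (\<i> * of_real pi * z)) = 2 * \<i> * sin (of_real pi * z)"
    by (simp add: sin_exp_eq field_simps)
  ultimately show ?thesis using Gamma_reflection_complex[of z]
    by (simp add: field_simps)
qed

lemma A_term:
  fixes q :: complex
  assumes "q \<noteq> 0" "q - inverse q \<noteq> 0"
  shows "(1 - q ^ (2 * (a + 1))) * (q powi (int (a + b) - 2 * int (a + 1) + 2) - q powi (- int (a + b)))
            / (1 - q ^ 2)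
       = (q ^ (a + 1) - inverse (q ^ (a + 1))) * (q ^ b - inverse (q ^ b)) / (q - inverse q)"
proof -
  have e1: "q powi (int (a + b) - 2 * int (a + 1) + 2) = q ^ b / q ^ a"
  proof -
    have "int (a + b) - 2 * int (a + 1) + 2 = int b - int a" by simp
    thus ?thesis using assms by (simp add: power_int_diff)
  qed
  have e2: "q powi (- int (a + b)) = inverse (q ^ a * q ^ b)"
    by (subst power_int_minus, subst power_int_of_nat) (simp add: power_add)
  have "1 - q ^ 2 \<noteq> 0" using assms by (auto simp: field_simps power2_eq_square)
  thus ?thesis using assms unfolding e1 e2
    by (simp add: field_simps power_add power2_eq_square power_mult)
qed

lemma ints_nonpos: "z \<in> \<int>\<^sub>\<le>\<^sub>0 \<Longrightarrow> (z::complex) \<in> \<int>"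
  using nonpos_Ints_subset_Ints by blast

lemma main_pointwise:
  fixes n :: nat and \<rho> :: complex
  assumes G: "\<forall>m\<in>{1..n}. of_nat m * \<rho> \<notin> \<int>" and n1: "n \<ge> 1"
  shows "A_pref n (exp (\<i> * of_real pi * \<rho>)) / of_nat (fact n)
      * selberg n (1 - of_nat n * \<rho>) (2 * \<rho> - 1) \<rho>
    = (2 * of_real pi * \<i>) ^ n / of_nat (fact n)
      * (\<Prod>k=1..n. Gamma ((of_nat k + 1) * \<rho> - 1) * Gamma (- \<rho>)
                    / ((Gamma (of_nat k * \<rho>)) ^ 2 * Gamma (- (of_nat k * \<rho>))))"
proof -
  define q where "q = exp (\<i> * of_real pi * \<rho>)"
  define s where "s m = q ^ m - inverse (q ^ m)" for m :: nat
  define G2 where "G2 k = Gamma ((of_nat k + 1) * \<rho> - 1) * Gamma (- \<rho>)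
                    / ((Gamma (of_nat k * \<rho>)) ^ 2 * Gamma (- (of_nat k * \<rho>)))" for k :: nat
  have q0: "q \<noteq> 0" by (simp add: q_def)
  have sexp: "s m = exp (\<i> * of_real pi * (of_nat m * \<rho>)) - exp (- (\<i> * of_real pi * (of_nat m * \<rho>)))" for m
  proof -
    have "q ^ m = exp (\<i> * of_real pi * (of_nat m * \<rho>))"
      unfolding q_def by (subst exp_of_nat_mult[symmetric]) (simp add: algebra_simps)
    thus ?thesis by (simp add: s_def exp_minus)
  qed
  have reflG: "s m * Gamma (of_nat m * \<rho>) * Gamma (1 - of_nat m * \<rho>) = 2 * of_real pi * \<i>"
    if "m \<in> {1..n}" for m
    unfolding sexp using refl_s[of "of_nat m * \<rho>"] G that by blast
  have nz: "Gamma (of_nat m * \<rho>) \<noteq> 0" "Gamma (1 - of_nat m * \<rho>) \<noteq> 0"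
      "Gamma (- (of_nat m * \<rho>)) \<noteq> 0" "s m \<noteq> 0" "of_nat m * \<rho> \<noteq> 0"
    if "m \<in> {1..n}" for m
  proof -
    have ni: "of_nat m * \<rho> \<notin> \<int>" using G that by blast
    show "Gamma (of_nat m * \<rho>) \<noteq> 0" using ni by (auto simp: Gamma_eq_zero_iff dest: ints_nonpos)
    show "Gamma (1 - of_nat m * \<rho>) \<noteq> 0" using ni
      by (auto simp: Gamma_eq_zero_iff dest!: ints_nonpos)
    show "Gamma (- (of_nat m * \<rho>)) \<noteq> 0" using ni
      by (auto simp: Gamma_eq_zero_iff dest!: ints_nonpos)
    show "s m \<noteq> 0" using reflG[OF that] by auto
    show "of_nat m * \<rho> \<noteq> 0" using ni by (metis Ints_0)
  qed
  have one: "(1::nat) \<in> {1..n}" using n1 by simp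
  have s1: "s 1 \<noteq> 0" using nz(4)[OF one] .
  have r0: "\<rho> \<noteq> 0" using nz(5)[OF one] by simp
  have \<rho>np: "\<rho> \<notin> \<int>\<^sub>\<le>\<^sub>0" using G one by (auto dest: ints_nonpos)
  have gr: "Gamma \<rho> \<noteq> 0" using nz(1)[OF one] by simp
  define P where "P k = s k * s (n + 1 - k) / s 1" for k
  define T where "T k = of_nat k * Gamma ((of_nat k + 1) * \<rho> - 1) * Gamma (1 - of_nat (n + 1 - k) * \<rho>) / Gamma \<rho>" for k
  define U where "U k = s k / s 1 * of_nat k * Gamma ((of_nat k + 1) * \<rho> - 1) / Gamma \<rho>" for k
  define V where "V k = s k * Gamma (1 - of_nat k * \<rho>)" for k
  have A: "A_pref n q = (\<Prod>k=1..n. P k)"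
    unfolding A_pref_def
  proof (rule prod.cong[OF refl])
    fix k assume k: "k \<in> {1..n}"
    define a where "a = k - 1"
    define b where "b = n - k"
    have ka: "k = a + 1" and nab: "n = a + b + 1" using k by (auto simp: a_def b_def)
    have "(1 - q ^ (2 * k)) * (q powi (int n - 2 * int k + 2) - q powi (- int n)) / (1 - q\<^sup>2)
        = (1 - q ^ (2 * (a + 1))) * (q powi (int (a + (b+1)) - 2 * int (a + 1) + 2) - q powi (- int (a + (b+1))))
            / (1 - q ^ 2)" by (simp add: ka nab)
    also have "\<dots> = s (a+1) * s (b+1) / s 1"
      using A_term[OF q0, of a "b+1"] s1 by (simp add: s_def)
    also have "\<dots> = P k" by (simp add: P_def ka nab)
    finally show "(1 - q ^ (2 * k)) * (q powi (int n - 2 * int k + 2) - q powi (- int n)) / (1 - q\<^sup>2) = P k" .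
  qed
  have S: "selberg n (1 - of_nat n * \<rho>) (2 * \<rho> - 1) \<rho> = (\<Prod>k=1..n. T k)"
    unfolding selberg_def prod_shift1n
  proof (rule prod.cong[OF refl])
    fix k assume k: "k \<in> {1..n}"
    define a where "a = k - 1"
    define b where "b = n - k"
    have ka: "k = a + 1" and nab: "n = a + b + 1" using k by (auto simp: a_def b_def)
    have e1: "1 - of_nat n * \<rho> + of_nat (k - 1) * \<rho> = 1 - of_nat (n + 1 - k) * \<rho>"
      by (simp add: ka nab algebra_simps)
    have e2: "2 * \<rho> - 1 + of_nat (k - 1) * \<rho> = (of_nat k + 1) * \<rho> - 1"
      by (simp add: ka algebra_simps)
    have e3: "1 - of_nat n * \<rho> + (2 * \<rho> - 1) + (of_nat n + of_nat (k - 1) - 1) * \<rho> = of_nat k * \<rho>"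
      by (simp add: ka nab algebra_simps)
    have e4: "1 + of_nat (k - 1 + 1) * \<rho> = of_nat k * \<rho> + 1" by (simp add: ka)
    have knp: "of_nat k * \<rho> \<notin> \<int>\<^sub>\<le>\<^sub>0" using G k by (auto dest: ints_nonpos)
    have g1: "Gamma (of_nat k * \<rho> + 1) = of_nat k * \<rho> * Gamma (of_nat k * \<rho>)"
      using Gamma_plus1[OF knp] .
    have g2: "Gamma (1 + \<rho>) = \<rho> * Gamma \<rho>" using Gamma_plus1[OF \<rho>np] by (simp add: add.commute)
    show "Gamma (1 - of_nat n * \<rho> + of_nat (k - 1) * \<rho>) * Gamma (2 * \<rho> - 1 + of_nat (k - 1) * \<rho>) *
         Gamma (1 + of_nat (k - 1 + 1) * \<rho>) /
         (Gamma (1 - of_nat n * \<rho> + (2 * \<rho> - 1) + (of_nat n + of_nat (k - 1) - 1) * \<rho>) * Gamma (1 + \<rho>)) = T k"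
      unfolding e1 e2 e3 e4 g1 g2 T_def using nz(1)[OF k] gr r0
      by (simp add: field_simps)
  qed
  have PT: "P k * T k = U k * V (n + 1 - k)" for k
    unfolding P_def T_def U_def V_def by (simp add: field_simps)
  have UV: "U k * V k = 2 * of_real pi * \<i> * G2 k" if k: "k \<in> {1..n}" for k
  proof -
    have r1: "s k * Gamma (of_nat k * \<rho>) * Gamma (1 - of_nat k * \<rho>) = 2 * of_real pi * \<i>"
      using reflG[OF k] .
    have r2: "s 1 * Gamma \<rho> * Gamma (1 - \<rho>) = 2 * of_real pi * \<i>"
      using reflG[OF one] by simp
    have knp: "- (of_nat k * \<rho>) \<notin> \<int>\<^sub>\<le>\<^sub>0" using G k
      by (auto dest!: ints_nonpos)
    have mnp: "- \<rho> \<notin> \<int>\<^sub>\<le>\<^sub>0" using G one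
      by (auto dest!: ints_nonpos)
    have g1: "Gamma (1 - of_nat k * \<rho>) = - (of_nat k * \<rho>) * Gamma (- (of_nat k * \<rho>))"
      using Gamma_plus1[OF knp] by (simp add: add.commute)
    have g2: "Gamma (1 - \<rho>) = - \<rho> * Gamma (- \<rho>)"
      using Gamma_plus1[OF mnp] by (simp add: add.commute)
    have sk: "s k = 2 * of_real pi * \<i> / (Gamma (of_nat k * \<rho>) * Gamma (1 - of_nat k * \<rho>))"
      using r1 nz(1,2)[OF k] by (simp add: field_simps)
    have ss1: "s 1 = 2 * of_real pi * \<i> / (Gamma \<rho> * Gamma (1 - \<rho>))"
      using r2 nz(1,2)[OF one] by (simp add: field_simps)
    have kk: "of_nat k \<noteq> (0::complex)" using k by simp
    have gm: "Gamma (- \<rho>) \<noteq> 0" using mnp by (simp add: Gamma_eq_zero_iff)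
    show ?thesis unfolding U_def V_def G2_def sk ss1 g1 g2
      using nz(1,3)[OF k] gr r0 kk gm pi_neq_zero
      by (simp add: field_simps power2_eq_square)
  qed
  have "A_pref n q / of_nat (fact n) * selberg n (1 - of_nat n * \<rho>) (2 * \<rho> - 1) \<rho>
      = (\<Prod>k=1..n. P k * T k) / of_nat (fact n)"
    unfolding A S prod.distrib by simp
  also have "(\<Prod>k=1..n. P k * T k) = (\<Prod>k=1..n. U k) * (\<Prod>k=1..n. V (n + 1 - k))"
    unfolding PT prod.distrib ..
  also have "\<dots> = (\<Prod>k=1..n. U k * V k)" unfolding prod_rev1n prod.distrib ..
  also have "\<dots> = (\<Prod>k=1..n. 2 * of_real pi * \<i> * G2 k)" using UV by (rule prod.cong[OF refl])
  also have "\<dots> = (2 * of_real pi * \<i>) ^ n * (\<Prod>k=1..n. G2 k)" by (simp add: prod.distrib)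
  finally show ?thesis unfolding q_def G2_def by simp
qed

theorem mainTheorem4:
  fixes n :: nat
  assumes "n \<ge> 1"
  shows "\<forall>\<^sub>\<approx>\<rho>::complex.
    A_pref n (exp (\<i> * of_real pi * \<rho>)) / of_nat (fact n)
      * selberg n (1 - of_nat n * \<rho>) (2 * \<rho> - 1) \<rho>
    = (2 * of_real pi * \<i>) ^ n / of_nat (fact n)
      * (\<Prod>k=1..n. Gamma ((of_nat k + 1) * \<rho> - 1) * Gamma (- \<rho>)
                    / ((Gamma (of_nat k * \<rho>)) ^ 2 * Gamma (- (of_nat k * \<rho>))))"
  unfolding eventually_cosparse
  by (rule sparse_in_subset2[OF exc_sparse[of n]]) (use main_pointwise[OF _ assms] in blast)

end
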